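(* Let $D \subseteq L$ be a total clone on $\{0,1\}$ such that $D \subseteq B$ for some $B \in \{T_0, T_1, S\}$. Then $\mathcal{I}_{\mathrm{str}}(D)$ has the cardinality of the continuum.
   Context: Let $\mathbf{2}=\{0,1\}$. A partial function of arity $n$ on $\mathbf{2}$ is a map $f:\operatorname{dom} f\to\mathbf{2}$ with $\operatorname{dom} f\subseteq \mathbf{2}^n$; it is total if $\operatorname{dom} f=\mathbf{2}^n$. $P_{\mathbf{2}}$ is the set of all partial functions, $O_{\mathbf{2}}$ the set of total ones. Composition $F=f(g_1,\dots,g_n)$ is given by $F(\mathbf{x})=f(g_1(\mathbf{x}),\dots,g_n(\mathbf{x}))$ on $\operatorname{dom} F=\{\mathbf{x}\in\bigcap_i\operatorname{dom} g_i : (g_1(\mathbf{x}),\dots,g_n(\mathbf{x}))\in\operatorname{dom} f\}$. A partial clone is a composition-closed subset of $P_{\mathbf{2}}$ containing all projections; a total clone is one contained in $O_{\mathbf{2}}$. A partial clone $X$ is strong if it contains every restriction of each of its members. For a total clone $C$, $\mathcal{I}_{\mathrm{str}}(C)$ is the set of all strong partial clones $X$ with $X\cap O_{\mathbf{2}}=C$. $L$ is the clone of linear functions $a_0\oplus a_1x_1\oplus\cdots\oplus a_nx_n$; $T_a$ is the clone of total functions with $f(a,\dots,a)=a$; $S$ is the clone of self-dual total functions. *)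

theory Defs
  imports Complex_Main "HOL-Library.Equipollence"
begin

text \<open>A partial function of arity n on 2 = {False, True} is represented as a pair (n, f)
  where f maps argument tuples (bool lists of length n) to an optional value;
  the domain of f is {x. f x \<noteq> None} and must consist of lists of length n.\<close>

type_synonym pfun = "nat \<times> (bool list \<Rightarrow> bool option)"

definition P2 :: "pfun set" where
  "P2 = {(n, f). n \<ge> 1 \<and> (\<forall>x. f x \<noteq> None \<longrightarrow> length x = n)}"

definition O2 :: "pfun set" where
  "O2 = {(n, f). (n, f) \<in> P2 \<and> (\<forall>x. length x = n \<longrightarrow> f x \<noteq> None)}"

definition proj :: "nat \<Rightarrow> nat \<Rightarrow> pfun" where
  "proj n i = (n, \<lambda>x. if length x = n then Some (x ! i) else None)"

definition pcomp :: "pfun \<Rightarrow> nat \<Rightarrow> (nat \<Rightarrow> bool list \<Rightarrow> bool option) \<Rightarrow> pfun" where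
  "pcomp F m gs = (case F of (n, f) \<Rightarrow>
     (m, \<lambda>x. if length x = m \<and> (\<forall>i<n. gs i x \<noteq> None)
             then f (map (\<lambda>i. the (gs i x)) [0..<n]) else None))"

definition partial_clone :: "pfun set \<Rightarrow> bool" where
  "partial_clone X \<longleftrightarrow> X \<subseteq> P2
     \<and> (\<forall>n i. 1 \<le> n \<longrightarrow> i < n \<longrightarrow> proj n i \<in> X)
     \<and> (\<forall>n f m gs. (n, f) \<in> X \<longrightarrow> (\<forall>i<n. (m, gs i) \<in> X) \<longrightarrow> pcomp (n, f) m gs \<in> X)"

definition total_clone :: "pfun set \<Rightarrow> bool" where
  "total_clone C \<longleftrightarrow> partial_clone C \<and> C \<subseteq> O2"

definition restriction_of :: "pfun \<Rightarrow> pfun \<Rightarrow> bool" where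
  "restriction_of G F \<longleftrightarrow> fst G = fst F \<and> (\<forall>x. snd G x \<noteq> None \<longrightarrow> snd G x = snd F x)"

definition strong :: "pfun set \<Rightarrow> bool" where
  "strong X \<longleftrightarrow> partial_clone X \<and> (\<forall>F\<in>X. \<forall>G. restriction_of G F \<longrightarrow> G \<in> X)"

definition I_str :: "pfun set \<Rightarrow> pfun set set" where
  "I_str C = {X. strong X \<and> X \<inter> O2 = C}"

text \<open>Linear functions a_0 \<oplus> a_1 x_1 \<oplus> ... \<oplus> a_n x_n.\<close>
definition Lin :: "pfun set" where
  "Lin = {(n, f). (n, f) \<in> O2 \<and> (\<exists>a0 as. length as = n \<and>
      (\<forall>x. length x = n \<longrightarrow> f x = Some (foldr (\<noteq>) (map2 (\<and>) as x) a0)))}"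

definition T :: "bool \<Rightarrow> pfun set" where
  "T a = {(n, f). (n, f) \<in> O2 \<and> f (replicate n a) = Some a}"

definition S :: "pfun set" where
  "S = {(n, f). (n, f) \<in> O2 \<and> (\<forall>x. length x = n \<longrightarrow> f (map Not x) = map_option Not (f x))}"

end

theory Submission
  imports Defs "HOL-Analysis.Abstract_Topology_2"
begin


definition xorl :: "bool list \<Rightarrow> bool list \<Rightarrow> bool list" where
  "xorl x y = map2 (\<noteq>) x y"

definition bvec :: "nat \<Rightarrow> nat set \<Rightarrow> bool list" where
  "bvec N A = map (\<lambda>i. i \<in> A) [0..<N]"

definition bsupp :: "bool list \<Rightarrow> nat set" where
  "bsupp x = {i. i < length x \<and> x!i}"

definition Wt :: "nat \<Rightarrow> nat \<Rightarrow> bool list set" where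
  "Wt N w = {x. length x = N \<and> card (bsupp x) = w}"

lemma length_xorl[simp]: "length (xorl x y) = min (length x) (length y)"
  by (simp add: xorl_def)

lemma nth_xorl[simp]: "i < length x \<Longrightarrow> i < length y \<Longrightarrow> xorl x y ! i = (x!i \<noteq> y!i)"
  by (simp add: xorl_def)

lemma length_vec[simp]: "length (bvec N A) = N" by (simp add: bvec_def)
lemma nth_vec[simp]: "i < N \<Longrightarrow> bvec N A ! i = (i \<in> A)" by (simp add: bvec_def)

lemma list_eqI': "length x = length y \<Longrightarrow> (\<And>i. i < length x \<Longrightarrow> x!i = y!i) \<Longrightarrow> x = y"
  by (simp add: list_eq_iff_nth_eq)

lemma vec_supp: "bvec (length x) (bsupp x) = x"
  by (rule list_eqI') (auto simp: bsupp_def)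

lemma supp_vec: "bsupp (bvec N A) = A \<inter> {..<N}"
  by (auto simp: bsupp_def)

lemma xorl_vec: "xorl (bvec N A) (bvec N B) = bvec N ((A - B) \<union> (B - A))"
  by (rule list_eqI') auto

lemma xorl_zero: "length x = n \<Longrightarrow> xorl x (replicate n False) = x"
  by (rule list_eqI') auto

lemma xorl_comm: "xorl x y = xorl y x"
  by (auto simp: xorl_def list_eq_iff_nth_eq)

lemma xorl_assoc: "xorl (xorl x y) z = xorl x (xorl y z)"
  by (rule list_eqI') auto

lemma xorl_self: "xorl x x = replicate (length x) False"
  by (rule list_eqI') auto

lemma xorl_ones: "length x = n \<Longrightarrow> xorl x (replicate n True) = map Not x"
  by (rule list_eqI') auto

lemma vec_in_Wt: "A \<subseteq> {..<N} \<Longrightarrow> card A = w \<Longrightarrow> bvec N A \<in> Wt N w"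
  by (auto simp: Wt_def supp_vec Int_absorb2)

lemma card_supp_le: "card (bsupp x) \<le> length x"
proof -
  have "bsupp x \<subseteq> {..<length x}" by (auto simp: bsupp_def)
  then show ?thesis using card_mono[of "{..<length x}" "bsupp x"] by simp
qed

lemma supp_not: "bsupp (map Not x) = {..<length x} - bsupp x"
  by (auto simp: bsupp_def)

lemma card_supp_not: "card (bsupp (map Not x)) = length x - card (bsupp x)"
proof -
  have "bsupp x \<subseteq> {..<length x}" by (auto simp: bsupp_def)
  then show ?thesis by (simp add: supp_not card_Diff_subset finite_subset)
qed



definition xsum :: "nat \<Rightarrow> bool list list \<Rightarrow> bool list" where
  "xsum n xs = foldr xorl xs (replicate n False)"

lemma xsum_Nil[simp]: "xsum n [] = replicate n False" by (simp add: xsum_def)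
lemma xsum_Cons[simp]: "xsum n (x#xs) = xorl x (xsum n xs)" by (simp add: xsum_def)

lemma xsum_props:
  assumes "\<forall>x\<in>set xs. length x = n"
  shows "length (xsum n xs) = n \<and> (\<forall>q<n. xsum n xs ! q = odd (length (filter (\<lambda>x. x!q) xs)))"
  using assms by (induction xs) auto

lemma card_supp_sum:
  assumes "length x = n"
  shows "card (bsupp x) = (\<Sum>q<n. of_bool (x!q))"
proof -
  have "(\<Sum>q<n. of_bool (x!q)) = card ({..<n} \<inter> {q. x!q})" by simp
  also have "{..<n} \<inter> {q. x!q} = bsupp x" using assms by (auto simp: bsupp_def)
  finally show ?thesis by simp
qed

lemma count_sum:
  assumes "\<forall>x\<in>set xs. length x = n"
  shows "sum_list (map (\<lambda>x. card (bsupp x)) xs) = (\<Sum>q<n. length (filter (\<lambda>x. x!q) xs))"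
  using assms
proof (induction xs)
  case Nil then show ?case by simp
next
  case (Cons x xs)
  have "sum_list (map (\<lambda>x. card (bsupp x)) (x#xs)) = card (bsupp x) + (\<Sum>q<n. length (filter (\<lambda>x. x!q) xs))"
    using Cons by simp
  also have "\<dots> = (\<Sum>q<n. of_bool (x!q)) + (\<Sum>q<n. length (filter (\<lambda>x. x!q) xs))"
    using Cons.prems card_supp_sum by simp
  also have "\<dots> = (\<Sum>q<n. of_bool (x!q) + length (filter (\<lambda>x. x!q) xs))"
    by (simp add: sum.distrib)
  also have "\<dots> = (\<Sum>q<n. length (filter (\<lambda>x. x!q) (x#xs)))"
    by (intro sum.cong) auto
  finally show ?case .
qed

lemma sum_list_const: "\<forall>x\<in>set xs. f x = c \<Longrightarrow> sum_list (map f xs) = length xs * c"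
  by (induction xs) auto

lemma lower_one:
  assumes "\<forall>x\<in>set xs. x \<in> Wt n w" and "xsum n xs = replicate n True"
  shows "n \<le> length xs * w"
proof -
  have len: "\<forall>x\<in>set xs. length x = n" using assms(1) by (auto simp: Wt_def)
  have "\<forall>q<n. odd (length (filter (\<lambda>x. x!q) xs))"
    using xsum_props[OF len] assms(2) by (metis nth_replicate)
  then have "\<forall>q<n. 1 \<le> length (filter (\<lambda>x. x!q) xs)" by (metis odd_pos One_nat_def Suc_leI)
  then have "(\<Sum>q<n. (1::nat)) \<le> (\<Sum>q<n. length (filter (\<lambda>x. x!q) xs))"
    by (intro sum_mono) auto
  also have "\<dots> = sum_list (map (\<lambda>x. card (bsupp x)) xs)" using count_sum[OF len] by simp
  also have "\<dots> = length xs * w" using assms(1) by (intro sum_list_const) (auto simp: Wt_def)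
  finally show ?thesis by simp
qed

lemma lower_zero:
  assumes "\<forall>x\<in>set xs. x \<in> Wt n w" and "xsum n xs = replicate n False" and "odd (length xs)"
  shows "length xs * w \<le> n * (length xs - 1)"
proof -
  have len: "\<forall>x\<in>set xs. length x = n" using assms(1) by (auto simp: Wt_def)
  have ev: "\<forall>q<n. even (length (filter (\<lambda>x. x!q) xs))"
    using xsum_props[OF len] assms(2) by (metis nth_replicate)
  have "\<forall>q<n. length (filter (\<lambda>x. x!q) xs) \<le> length xs - 1"
  proof (intro allI impI)
    fix q assume "q < n"
    have a: "length (filter (\<lambda>x. x!q) xs) \<le> length xs" by simp
    have b: "length (filter (\<lambda>x. x!q) xs) \<noteq> length xs" using ev \<open>q<n\<close> assms(3) by metis
    from a b show "length (filter (\<lambda>x. x!q) xs) \<le> length xs - 1" by linarith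
  qed
  then have "(\<Sum>q<n. length (filter (\<lambda>x. x!q) xs)) \<le> (\<Sum>q<n. length xs - 1)"
    by (intro sum_mono) auto
  moreover have "(\<Sum>q<n. length (filter (\<lambda>x. x!q) xs)) = length xs * w"
    using count_sum[OF len] assms(1) sum_list_const[of xs "\<lambda>x. card (bsupp x)" w]
    by (auto simp: Wt_def)
  ultimately show ?thesis by (simp add: mult.commute)
qed



definition baff :: "(bool list \<Rightarrow> bool list) \<Rightarrow> nat \<Rightarrow> nat \<Rightarrow> bool" where
  "baff G n d \<longleftrightarrow> (\<forall>x. length x = n \<longrightarrow> length (G x) = d) \<and>
     (\<forall>x y z. length x = n \<longrightarrow> length y = n \<longrightarrow> length z = n \<longrightarrow>
        G (xorl x (xorl y z)) = xorl (G x) (xorl (G y) (G z)))"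

lemma aff_len: "baff G n d \<Longrightarrow> length x = n \<Longrightarrow> length (G x) = d"
  by (simp add: baff_def)

lemma aff_3: "baff G n d \<Longrightarrow> length x = n \<Longrightarrow> length y = n \<Longrightarrow> length z = n \<Longrightarrow>
        G (xorl x (xorl y z)) = xorl (G x) (xorl (G y) (G z))"
  by (simp add: baff_def)

lemma odd_transfer:
  assumes "baff G n d" "\<forall>x\<in>set xs. length x = n" "odd (length xs)"
  shows "G (xsum n xs) = xsum d (map G xs)"
  using assms(2,3)
proof (induction xs rule: induct_list012)
  case 1 then show ?case by simp
next
  case (2 x)
  then show ?case using aff_len[OF assms(1)] by (simp add: xorl_zero)
next
  case (3 x y zs)
  then have l: "\<forall>x\<in>set zs. length x = n" "odd (length zs)" by auto
  have lz: "length (xsum n zs) = n" using xsum_props[OF l(1)] by simp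
  have "G (xsum n (x#y#zs)) = G (xorl x (xorl y (xsum n zs)))" by simp
  also have "\<dots> = xorl (G x) (xorl (G y) (G (xsum n zs)))"
    using aff_3[OF assms(1)] 3 lz by simp
  also have "\<dots> = xsum d (map G (x#y#zs))" using 3(1)[OF l] by simp
  finally show ?case .
qed

lemma xorl_ones_eq:
  assumes "length x = n" "length y = n" "xorl x y = replicate n True"
  shows "y = map Not x"
proof (rule list_eqI')
  show "length y = length (map Not x)" using assms by simp
  fix i assume "i < length y"
  have "(x!i \<noteq> y!i) = xorl x y ! i" using assms(1,2) \<open>i < length y\<close> by simp
  also have "\<dots> = True" using assms \<open>i < length y\<close> by simp
  finally have "x!i \<noteq> y!i" by simp
  then show "y ! i = map Not x ! i" using assms \<open>i < length y\<close> by auto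
qed

lemma even_transfer:
  assumes "baff G n d" "\<forall>x. length x = n \<longrightarrow> G (map Not x) = map Not (G x)"
    "\<forall>x\<in>set xs. length x = n" "even (length xs)" "xs \<noteq> []"
    "xsum n xs = replicate n True"
  shows "xsum d (map G xs) = replicate d True"
proof -
  obtain x rest where xs: "xs = x # rest" using assms(5) by (cases xs) auto
  have l: "\<forall>x\<in>set rest. length x = n" "odd (length rest)" "length x = n" using assms(3,4) xs by auto
  have lr: "length (xsum n rest) = n" using xsum_props[OF l(1)] by simp
  have "xorl x (xsum n rest) = replicate n True" using assms(6) xs by simp
  then have e: "xsum n rest = map Not x" using xorl_ones_eq l(3) lr by blast
  have "xsum d (map G rest) = G (xsum n rest)" using odd_transfer[OF assms(1) l(1,2)] by simp
  also have "\<dots> = map Not (G x)" using e assms(2) l(3) by simp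
  finally have "xsum d (map G xs) = xorl (G x) (map Not (G x))" using xs by simp
  also have "\<dots> = replicate d True" using aff_len[OF assms(1) l(3)] by (intro list_eqI') auto
  finally show ?thesis .
qed

inductive pairable :: "(nat \<Rightarrow> 'a) \<Rightarrow> nat set \<Rightarrow> bool" for lab where
  pe: "pairable lab {}"
| pi: "pairable lab P \<Longrightarrow> p \<notin> P \<Longrightarrow> q \<notin> P \<Longrightarrow> p \<noteq> q \<Longrightarrow> lab p = lab q \<Longrightarrow>
        pairable lab (insert p (insert q P))"

lemma flip_pairs:
  assumes "baff G n d" "pairable (\<lambda>p. G (bvec n {p})) P" "P \<subseteq> {..<n}" "length z = n"
  shows "G (xorl z (bvec n P)) = G z"
  using assms(2,3)
proof (induction P rule: pairable.induct)
  case pe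
  have "bvec n {} = replicate n False" by (intro list_eqI') auto
  then show ?case using assms(4) by (simp add: xorl_zero)
next
  case (pi P p q)
  have pq: "p < n" "q < n" "P \<subseteq> {..<n}" using pi.prems by auto
  have v: "bvec n (insert p (insert q P)) = xorl (bvec n P) (xorl (bvec n {p}) (bvec n {q}))"
    using pi.hyps pq by (intro list_eqI') auto
  have "G (xorl z (bvec n (insert p (insert q P)))) = G (xorl (xorl z (bvec n P)) (xorl (bvec n {p}) (bvec n {q})))"
    by (simp add: v xorl_assoc)
  also have "\<dots> = xorl (G (xorl z (bvec n P))) (xorl (G (bvec n {p})) (G (bvec n {q})))"
    using aff_3[OF assms(1)] assms(4) by simp
  also have "\<dots> = xorl (G z) (xorl (G (bvec n {q})) (G (bvec n {q})))"
    using pi.IH[OF pq(3)] pi.hyps(5) by simp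
  also have "\<dots> = G z"
    using aff_len[OF assms(1)] assms(4) by (simp add: xorl_self xorl_zero)
  finally show ?case .
qed

lemma pigeon:
  assumes "finite M" "K + 2*r \<le> card M" "card (lab ` M) \<le> K"
  shows "\<exists>P\<subseteq>M. pairable lab P \<and> card P = 2*r"
  using assms
proof (induction r arbitrary: M)
  case 0 then show ?case by (auto intro: pe)
next
  case (Suc r)
  have "card (lab ` M) < card M" using Suc.prems by simp
  then have "\<not> inj_on lab M" using card_image by fastforce
  then obtain p q where pq: "p \<in> M" "q \<in> M" "p \<noteq> q" "lab p = lab q" by (auto simp: inj_on_def)
  let ?M = "M - {p,q}"
  have "card ?M = card M - 2" using pq Suc.prems(1) by (simp add: card_Diff_subset)
  then have c: "K + 2*r \<le> card ?M" using Suc.prems(2) by simp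
  have "card (lab ` ?M) \<le> card (lab ` M)" by (intro card_mono) (auto simp: Suc.prems(1))
  then have "card (lab ` ?M) \<le> K" using Suc.prems by simp
  then obtain P where P: "P \<subseteq> ?M" "pairable lab P" "card P = 2*r"
    using Suc.IH[OF _ c] Suc.prems(1) by auto
  have fP: "finite P" using P(1) Suc.prems(1) finite_subset by blast
  have "pairable lab (insert p (insert q P))" using P pq by (intro pi) auto
  moreover have "p \<notin> P" "q \<notin> P" using P(1) by auto
  moreover have "card (insert p (insert q P)) = 2 * Suc r" using P pq fP calculation by auto
  moreover have "insert p (insert q P) \<subseteq> M" using P pq by auto
  ultimately show ?case by blast
qed

lemma card_len_lists: "card {xs :: bool list. length xs = d} = 2^d"
  using card_lists_length_eq[of "UNIV::bool set" d] by simp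

lemma pigeon_aff:
  assumes "baff G n d" "M \<subseteq> {..<n}" "2^d + 2*r \<le> card M"
  shows "\<exists>P\<subseteq>M. pairable (\<lambda>p. G (bvec n {p})) P \<and> card P = 2*r"
proof -
  have "(\<lambda>p. G (bvec n {p})) ` M \<subseteq> {xs. length xs = d}" using aff_len[OF assms(1)] by auto
  moreover have fin: "finite {xs::bool list. length xs = d}"
    using finite_lists_length_eq[of "UNIV::bool set" d] by simp
  ultimately have "card ((\<lambda>p. G (bvec n {p})) ` M) \<le> 2^d"
    using card_mono card_len_lists by metis
  then show ?thesis using pigeon[OF _ assms(3)] assms(2) finite_subset by blast
qed



definition tt :: "nat \<Rightarrow> nat \<Rightarrow> nat" where "tt e k = 2*k + 3 + e"

primrec ss :: "nat \<Rightarrow> nat \<Rightarrow> nat" where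
  "ss e 0 = 2"
| "ss e (Suc k) = 2 ^ (tt e k * ss e k)"

definition NN :: "nat \<Rightarrow> nat \<Rightarrow> nat" where "NN e k = tt e k * ss e k"

lemma ss_ge2: "2 \<le> ss e k"
proof (induction k)
  case 0 then show ?case by simp
next
  case (Suc k)
  have "1 \<le> tt e k * ss e k" using Suc by (simp add: tt_def)
  then have "2^1 \<le> (2::nat) ^ (tt e k * ss e k)" by (intro power_increasing) auto
  then show ?case by simp
qed

lemma NN_Suc_ge: "NN e k \<le> NN e (Suc k)"
proof -
  have "NN e k < 2 ^ NN e k" by (rule less_exp)
  also have "\<dots> = ss e (Suc k)" by (simp add: NN_def)
  also have "\<dots> \<le> NN e (Suc k)" by (simp add: NN_def tt_def)
  finally show ?thesis by simp
qed

lemma NN_mono: "j \<le> k \<Longrightarrow> NN e j \<le> NN e k"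
  using NN_Suc_ge by (metis lift_Suc_mono_le)

lemma ss_big: "j < k \<Longrightarrow> 2 ^ NN e j \<le> ss e k"
proof -
  assume "j < k"
  then obtain k' where k: "k = Suc k'" "j \<le> k'" by (cases k) auto
  have "2 ^ NN e j \<le> (2::nat) ^ NN e k'" using NN_mono[OF k(2)] by (intro power_increasing) auto
  then show ?thesis using k by (simp add: NN_def)
qed

definition blk :: "nat \<Rightarrow> nat \<Rightarrow> nat set" where "blk s i = {i*s..<(i+1)*s}"

lemma blk_sub: "i < t \<Longrightarrow> blk s i \<subseteq> {..<t*s}"
proof -
  assume "i < t"
  then have "(i+1)*s \<le> t*s" by (intro mult_le_mono1) simp
  then show ?thesis by (auto simp: blk_def)
qed

lemma card_blk: "card (blk s i) = s" by (simp add: blk_def)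

lemma blk_iff: "0 < s \<Longrightarrow> (q \<in> blk s i) = (i = q div s)"
proof -
  assume s: "0 < s"
  show ?thesis
  proof
    assume "q \<in> blk s i"
    then have "i*s \<le> q" "q < (i+1)*s" by (auto simp: blk_def)
    then show "i = q div s" using s
      by (metis add.commute div_nat_eqI mult.commute plus_1_eq_Suc)
  next
    assume "i = q div s"
    moreover have "q div s * s \<le> q" by (metis div_mult_mod_eq le_add1)
    moreover have "q < s + q div s * s" using mod_less_divisor[OF s, of q] div_mult_mod_eq[of q s] by linarith
    ultimately show "q \<in> blk s i" by (auto simp: blk_def)
  qed
qed

lemma blk_count:
  assumes "0 < s" "q < t*s"
  shows "{i. i < t \<and> q \<in> blk s i} = {q div s}"
proof -
  have "q div s < t" using assms by (simp add: div_less_iff_less_mult)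
  then show ?thesis using blk_iff[OF assms(1)] by auto
qed



lemma len_filter_upt: "length (filter P [0..<t]) = card {i. i < t \<and> P i}"
proof -
  have "length (filter P [0..<t]) = card (set (filter P [0..<t]))"
    by (metis distinct_card distinct_filter distinct_upt)
  also have "set (filter P [0..<t]) = {i. i < t \<and> P i}" by auto
  finally show ?thesis .
qed

lemma blocks_witness:
  assumes "0 < s" "N = t*s"
  shows "(\<forall>x\<in>set (map (\<lambda>i. bvec N (blk s i)) [0..<t]). x \<in> Wt N s)
       \<and> xsum N (map (\<lambda>i. bvec N (blk s i)) [0..<t]) = replicate N True"
proof
  show "\<forall>x\<in>set (map (\<lambda>i. bvec N (blk s i)) [0..<t]). x \<in> Wt N s"
  proof
    fix x assume "x \<in> set (map (\<lambda>i. bvec N (blk s i)) [0..<t])"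
    then obtain i where i: "i < t" "x = bvec N (blk s i)" by auto
    show "x \<in> Wt N s" unfolding i(2) using blk_sub[OF i(1), of s] assms(2) card_blk by (intro vec_in_Wt) auto
  qed
  let ?xs = "map (\<lambda>i. bvec N (blk s i)) [0..<t]"
  have len: "\<forall>x\<in>set ?xs. length x = N" by simp
  show "xsum N ?xs = replicate N True"
  proof (rule list_eqI')
    show "length (xsum N ?xs) = length (replicate N True)" using xsum_props[OF len] by simp
    fix q assume "q < length (xsum N ?xs)"
    then have q: "q < N" using xsum_props[OF len] by simp
    have "length (filter (\<lambda>x. x!q) ?xs) = length (filter (\<lambda>i. q \<in> blk s i) [0..<t])"
      using q by (simp add: o_def)
    also have "\<dots> = card {i. i < t \<and> q \<in> blk s i}" by (rule len_filter_upt)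
    also have "\<dots> = 1" using blk_count[OF assms(1)] q assms(2) by simp
    finally show "xsum N ?xs ! q = replicate N True ! q" using xsum_props[OF len] q by simp
  qed
qed

lemma coblocks_witness:
  assumes "0 < s" "N = t*s" "odd t"
  shows "(\<forall>x\<in>set (map (\<lambda>i. bvec N ({..<N} - blk s i)) [0..<t]). x \<in> Wt N (N - s))
       \<and> xsum N (map (\<lambda>i. bvec N ({..<N} - blk s i)) [0..<t]) = replicate N False"
proof
  show "\<forall>x\<in>set (map (\<lambda>i. bvec N ({..<N} - blk s i)) [0..<t]). x \<in> Wt N (N - s)"
  proof
    fix x assume "x \<in> set (map (\<lambda>i. bvec N ({..<N} - blk s i)) [0..<t])"
    then obtain i where i: "i < t" "x = bvec N ({..<N} - blk s i)" by auto
    have "blk s i \<subseteq> {..<N}" using blk_sub[OF i(1), of s] assms(2) by simp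
    then have "card ({..<N} - blk s i) = N - s" using card_blk by (simp add: card_Diff_subset finite_subset)
    then show "x \<in> Wt N (N - s)" unfolding i(2) by (intro vec_in_Wt) auto
  qed
  let ?xs = "map (\<lambda>i. bvec N ({..<N} - blk s i)) [0..<t]"
  have len: "\<forall>x\<in>set ?xs. length x = N" by simp
  show "xsum N ?xs = replicate N False"
  proof (rule list_eqI')
    show "length (xsum N ?xs) = length (replicate N False)" using xsum_props[OF len] by simp
    fix q assume "q < length (xsum N ?xs)"
    then have q: "q < N" using xsum_props[OF len] by simp
    have "length (filter (\<lambda>x. x!q) ?xs) = length (filter (\<lambda>i. q \<notin> blk s i) [0..<t])"
      using q by (simp add: o_def)
    also have "\<dots> = card {i. i < t \<and> q \<notin> blk s i}" by (rule len_filter_upt)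
    also have "{i. i < t \<and> q \<notin> blk s i} = {..<t} - {i. i < t \<and> q \<in> blk s i}" by auto
    also have "\<dots> = {..<t} - {q div s}" using blk_count[OF assms(1)] q assms(2) by simp
    also have "card \<dots> = t - 1"
    proof -
      have "q div s < t" using q assms by (simp add: div_less_iff_less_mult)
      then show ?thesis by simp
    qed
    finally show "xsum N ?xs ! q = replicate N False ! q" using xsum_props[OF len] q assms(3)
      by simp
  qed
qed



lemma arith0:
  fixes a t s :: nat
  assumes "a*(t*s - s) \<le> t*s*(a - 1)" "0 < s" "1 \<le> a" "1 \<le> t"
  shows "t \<le> a"
proof -
  have h: "int (a*(t*s - s)) \<le> int (t*s*(a - 1))" using assms(1) by linarith
  have "s \<le> t*s" using assms(4) by simp
  then have e1: "int (t*s - s) = (int t - 1) * int s" by (simp add: of_nat_diff algebra_simps)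
  have e2: "int (a - 1) = int a - 1" using assms(3) by simp
  from h have "int a * ((int t - 1) * int s) \<le> int t * int s * (int a - 1)"
    by (simp only: of_nat_mult e1 e2)
  then have "int a * (int t - 1) * int s \<le> int t * (int a - 1) * int s" by (simp add: algebra_simps)
  then have "int a * (int t - 1) \<le> int t * (int a - 1)" using assms(2) by simp
  then show ?thesis by (simp add: algebra_simps)
qed

lemma tt_pos: "3 \<le> tt e k" by (simp add: tt_def)
lemma tt_mono: "k < j \<Longrightarrow> tt e k < tt e j" by (simp add: tt_def)
lemma ss_pos: "0 < ss e k" using ss_ge2[of e k] by simp

lemma NN_gt_ss: "ss e k < NN e k"
proof -
  have "1 * ss e k < 3 * ss e k" using ss_pos by simp
  also have "\<dots> \<le> tt e k * ss e k" using tt_pos by (intro mult_le_mono1)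
  finally show ?thesis by (simp add: NN_def)
qed

lemma ones_not_Wt: "w < n \<Longrightarrow> replicate n True \<notin> Wt n w"
proof -
  assume "w < n"
  have "bsupp (replicate n True) = {..<n}" by (auto simp: bsupp_def)
  then show ?thesis using \<open>w < n\<close> by (auto simp: Wt_def)
qed

lemma zeros_not_Wt: "0 < w \<Longrightarrow> replicate n False \<notin> Wt n w"
proof -
  assume "0 < w"
  have "bsupp (replicate n False) = {}" by (auto simp: bsupp_def)
  then show ?thesis using \<open>0 < w\<close> by (auto simp: Wt_def)
qed

lemma anti_T0:
  assumes baff: "baff G (NN 0 k) (NN 0 j)"
    and z: "G (replicate (NN 0 k) False) = replicate (NN 0 j) False"
    and m: "\<forall>x \<in> Wt (NN 0 k) (NN 0 k - ss 0 k). G x \<in> Wt (NN 0 j) (NN 0 j - ss 0 j)"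
  shows "j = k"
proof (rule ccontr)
  assume "j \<noteq> k"
  then consider "j < k" | "k < j" by linarith
  then show False
  proof cases
    case 1
    let ?N = "NN 0 k" and ?s = "ss 0 k" and ?d = "NN 0 j"
    have ev: "?N - ?s = 2 * ((?N - ?s) div 2)"
    proof -
      have "?N - ?s = (tt 0 k - 1) * ?s" by (simp add: NN_def diff_mult_distrib)
      also have "tt 0 k - 1 = 2 * (k+1)" by (simp add: tt_def)
      finally show ?thesis by simp
    qed
    have "2^?d + 2 * ((?N - ?s) div 2) \<le> card {..<?N}"
      using ss_big[OF 1, of 0] NN_gt_ss[of 0 k] ev by simp
    then have "\<exists>P\<subseteq>{..<?N}. pairable (\<lambda>p. G (bvec ?N {p})) P \<and> card P = 2 * ((?N - ?s) div 2)"
      by (intro pigeon_aff[OF baff]) auto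
    then obtain P where P: "P \<subseteq> {..<?N}" "pairable (\<lambda>p. G (bvec ?N {p})) P" "card P = ?N - ?s"
      using ev by metis
    have "G (xorl (replicate ?N False) (bvec ?N P)) = G (replicate ?N False)"
      by (rule flip_pairs[OF baff P(2,1)]) simp
    then have "G (bvec ?N P) = replicate ?d False"
      using z by (simp add: xorl_comm[of "replicate _ _"] xorl_zero)
    moreover have "bvec ?N P \<in> Wt ?N (?N - ?s)" using P by (intro vec_in_Wt) auto
    ultimately have "replicate ?d False \<in> Wt ?d (?d - ss 0 j)" using m by metis
    moreover have "0 < ?d - ss 0 j" using NN_gt_ss[of 0 j] by simp
    ultimately show False using zeros_not_Wt by blast
  next
    case 2
    let ?N = "NN 0 k" and ?s = "ss 0 k" and ?d = "NN 0 j" and ?t = "tt 0 k"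
    let ?xs = "map (\<lambda>i. bvec ?N ({..<?N} - blk ?s i)) [0..<?t]"
    have oddt: "odd ?t" by (simp add: tt_def)
    have W: "\<forall>x\<in>set ?xs. x \<in> Wt ?N (?N - ?s)" "xsum ?N ?xs = replicate ?N False"
      using coblocks_witness[OF ss_pos NN_def oddt] by auto
    have len: "\<forall>x\<in>set ?xs. length x = ?N" by simp
    have "xsum ?d (map G ?xs) = G (xsum ?N ?xs)"
      using odd_transfer[OF baff len] oddt by simp
    also have "\<dots> = replicate ?d False" using W(2) z by simp
    finally have s0: "xsum ?d (map G ?xs) = replicate ?d False" .
    have inW: "\<forall>y\<in>set (map G ?xs). y \<in> Wt ?d (?d - ss 0 j)" using W(1) m by auto
    have "length (map G ?xs) * (?d - ss 0 j) \<le> ?d * (length (map G ?xs) - 1)"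
      using lower_zero[OF inW s0] oddt by simp
    then have "?t * (tt 0 j * ss 0 j - ss 0 j) \<le> tt 0 j * ss 0 j * (?t - 1)"
      by (simp add: NN_def)
    then have "tt 0 j \<le> ?t" using arith0 ss_pos tt_pos
      by (metis One_nat_def Suc_leD numeral_3_eq_3 le_trans)
    then show False using tt_mono[OF 2, of 0] by simp
  qed
qed



lemma card_le_tt: "t*s \<le> a*s \<Longrightarrow> 0 < (s::nat) \<Longrightarrow> t \<le> a" by simp

lemma anti_T1:
  assumes baff: "baff G (NN 0 k) (NN 0 j)"
    and z: "G (replicate (NN 0 k) True) = replicate (NN 0 j) True"
    and m: "\<forall>x \<in> Wt (NN 0 k) (ss 0 k). G x \<in> Wt (NN 0 j) (ss 0 j)"
  shows "j = k"
proof (rule ccontr)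
  assume "j \<noteq> k"
  then consider "j < k" | "k < j" by linarith
  then show False
  proof cases
    case 1
    let ?N = "NN 0 k" and ?s = "ss 0 k" and ?d = "NN 0 j"
    have ev: "?N - ?s = 2 * ((?N - ?s) div 2)"
    proof -
      have "?N - ?s = (tt 0 k - 1) * ?s" by (simp add: NN_def diff_mult_distrib)
      also have "tt 0 k - 1 = 2 * (k+1)" by (simp add: tt_def)
      finally show ?thesis by simp
    qed
    have "2^?d + 2 * ((?N - ?s) div 2) \<le> card {..<?N}"
      using ss_big[OF 1, of 0] NN_gt_ss[of 0 k] ev by simp
    then have "\<exists>P\<subseteq>{..<?N}. pairable (\<lambda>p. G (bvec ?N {p})) P \<and> card P = 2 * ((?N - ?s) div 2)"
      by (intro pigeon_aff[OF baff]) auto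
    then obtain P where P: "P \<subseteq> {..<?N}" "pairable (\<lambda>p. G (bvec ?N {p})) P" "card P = ?N - ?s"
      using ev by metis
    have "G (xorl (replicate ?N True) (bvec ?N P)) = G (replicate ?N True)"
      by (rule flip_pairs[OF baff P(2,1)]) simp
    moreover have "xorl (replicate ?N True) (bvec ?N P) = bvec ?N ({..<?N} - P)"
      using P(1) by (intro list_eqI') auto
    ultimately have e: "G (bvec ?N ({..<?N} - P)) = replicate ?d True" using z by simp
    have "card ({..<?N} - P) = ?s" using P NN_gt_ss[of 0 k]
      by (simp add: card_Diff_subset finite_subset)
    then have "bvec ?N ({..<?N} - P) \<in> Wt ?N ?s" by (intro vec_in_Wt) auto
    then have "replicate ?d True \<in> Wt ?d (ss 0 j)" using m e by metis
    then show False using ones_not_Wt NN_gt_ss[of 0 j] by blast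
  next
    case 2
    let ?N = "NN 0 k" and ?s = "ss 0 k" and ?d = "NN 0 j" and ?t = "tt 0 k"
    let ?xs = "map (\<lambda>i. bvec ?N (blk ?s i)) [0..<?t]"
    have oddt: "odd ?t" by (simp add: tt_def)
    have W: "\<forall>x\<in>set ?xs. x \<in> Wt ?N ?s" "xsum ?N ?xs = replicate ?N True"
      using blocks_witness[OF ss_pos NN_def] by auto
    have len: "\<forall>x\<in>set ?xs. length x = ?N" by simp
    have "xsum ?d (map G ?xs) = G (xsum ?N ?xs)"
      using odd_transfer[OF baff len] oddt by simp
    also have "\<dots> = replicate ?d True" using W(2) z by simp
    finally have s1: "xsum ?d (map G ?xs) = replicate ?d True" .
    have inW: "\<forall>y\<in>set (map G ?xs). y \<in> Wt ?d (ss 0 j)" using W(1) m by auto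
    have "?d \<le> length (map G ?xs) * ss 0 j" using lower_one[OF inW s1] .
    then have "tt 0 j * ss 0 j \<le> ?t * ss 0 j" by (simp add: NN_def)
    then have "tt 0 j \<le> ?t" using ss_pos by simp
    then show False using tt_mono[OF 2, of 0] by simp
  qed
qed

lemma anti_S:
  assumes baff: "baff G (NN 1 k) (NN 1 j)"
    and sd: "\<forall>x. length x = NN 1 k \<longrightarrow> G (map Not x) = map Not (G x)"
    and m: "\<forall>x \<in> Wt (NN 1 k) (ss 1 k). G x \<in> Wt (NN 1 j) (ss 1 j)"
  shows "j = k"
proof (rule ccontr)
  assume "j \<noteq> k"
  then consider "j < k" | "k < j" by linarith
  then show False
  proof cases
    case 1
    let ?N = "NN 1 k" and ?s = "ss 1 k" and ?d = "NN 1 j"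
    have Ns: "2 * ?s \<le> ?N" using ss_pos[of 1 k] tt_pos[of 1 k] by (simp add: NN_def)
    have ev: "?N - 2 * ?s = 2 * ((?N - 2 * ?s) div 2)"
    proof -
      have "?N - 2 * ?s = (tt 1 k - 2) * ?s" by (simp add: NN_def diff_mult_distrib)
      also have "tt 1 k - 2 = 2 * (k+1)" by (simp add: tt_def)
      finally show ?thesis by simp
    qed
    have cM: "card {?s..<?N} = ?N - ?s" by simp
    have "2^?d + 2 * ((?N - 2 * ?s) div 2) \<le> card {?s..<?N}"
      using ss_big[OF 1, of 1] Ns ev cM by simp
    then have "\<exists>P\<subseteq>{?s..<?N}. pairable (\<lambda>p. G (bvec ?N {p})) P \<and> card P = 2 * ((?N - 2 * ?s) div 2)"
      by (intro pigeon_aff[OF baff]) auto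
    then obtain P where P: "P \<subseteq> {?s..<?N}" "pairable (\<lambda>p. G (bvec ?N {p})) P" "card P = ?N - 2 * ?s"
      using ev by metis
    have P': "P \<subseteq> {..<?N}" using P(1) by auto
    let ?z = "bvec ?N {..<?s}"
    have zW: "?z \<in> Wt ?N ?s" using Ns by (intro vec_in_Wt) auto
    have "G (xorl (map Not ?z) (bvec ?N P)) = G (map Not ?z)"
      by (rule flip_pairs[OF baff P(2) P']) simp
    also have "\<dots> = map Not (G ?z)" using sd by simp
    finally have e1: "G (xorl (map Not ?z) (bvec ?N P)) = map Not (G ?z)" .
    have e2: "xorl (map Not ?z) (bvec ?N P) = bvec ?N ({?s..<?N} - P)"
      using P(1) by (intro list_eqI') auto
    have "card ({?s..<?N} - P) = ?s" using P Ns
      by (simp add: card_Diff_subset finite_subset)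
    then have "bvec ?N ({?s..<?N} - P) \<in> Wt ?N ?s" by (intro vec_in_Wt) auto
    then have a: "map Not (G ?z) \<in> Wt ?d (ss 1 j)" using m e1 e2 by metis
    have b: "G ?z \<in> Wt ?d (ss 1 j)" using m zW by blast
    have "card (bsupp (map Not (G ?z))) = ?d - ss 1 j" using b by (simp add: card_supp_not Wt_def)
    then have "?d - ss 1 j = ss 1 j" using a by (simp add: Wt_def)
    moreover have "3 * ss 1 j \<le> ?d" using tt_pos[of 1 j] by (simp add: NN_def)
    ultimately show False using ss_pos[of 1 j] by linarith
  next
    case 2
    let ?N = "NN 1 k" and ?s = "ss 1 k" and ?d = "NN 1 j" and ?t = "tt 1 k"
    let ?xs = "map (\<lambda>i. bvec ?N (blk ?s i)) [0..<?t]"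
    have event: "even ?t" by (simp add: tt_def)
    have W: "\<forall>x\<in>set ?xs. x \<in> Wt ?N ?s" "xsum ?N ?xs = replicate ?N True"
      using blocks_witness[OF ss_pos NN_def] by auto
    have len: "\<forall>x\<in>set ?xs. length x = ?N" by simp
    have ne: "?xs \<noteq> []" using tt_pos[of 1 k] by simp
    have s1: "xsum ?d (map G ?xs) = replicate ?d True"
      using even_transfer[OF baff sd len _ ne W(2)] event by simp
    have inW: "\<forall>y\<in>set (map G ?xs). y \<in> Wt ?d (ss 1 j)" using W(1) m by auto
    have "?d \<le> length (map G ?xs) * ss 1 j" using lower_one[OF inW s1] .
    then have "tt 1 j * ss 1 j \<le> ?t * ss 1 j" by (simp add: NN_def)
    then have "tt 1 j \<le> ?t" using ss_pos by simp
    then show False using tt_mono[OF 2, of 1] by simp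
  qed
qed



definition Dmap :: "pfun set \<Rightarrow> nat \<Rightarrow> nat \<Rightarrow> (nat \<Rightarrow> bool list \<Rightarrow> bool option) \<Rightarrow> bool" where
  "Dmap D n d gs \<longleftrightarrow> (\<forall>i<d. (n, gs i) \<in> D)"

definition dapp :: "(nat \<Rightarrow> bool list \<Rightarrow> bool option) \<Rightarrow> nat \<Rightarrow> bool list \<Rightarrow> bool list" where
  "dapp gs d x = map (\<lambda>i. the (gs i x)) [0..<d]"

definition Qp :: "pfun set \<Rightarrow> (nat \<Rightarrow> bool list set) \<Rightarrow> (nat \<Rightarrow> nat) \<Rightarrow> nat set \<Rightarrow> nat \<Rightarrow> bool list set \<Rightarrow> bool" where
  "Qp D F dm A n Sx \<longleftrightarrow> (\<exists>j\<in>A. \<exists>gs. Dmap D n (dm j) gs \<and> (\<forall>x\<in>Sx. dapp gs (dm j) x \<in> F j))"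

definition Res :: "pfun set \<Rightarrow> pfun set" where
  "Res D = {G. \<exists>H\<in>D. restriction_of G H}"

definition XX :: "pfun set \<Rightarrow> (nat \<Rightarrow> bool list set) \<Rightarrow> (nat \<Rightarrow> nat) \<Rightarrow> nat set \<Rightarrow> pfun set" where
  "XX D F dm A = Res D \<union> {(n, f). (n, f) \<in> P2 \<and> Qp D F dm A n {x. f x \<noteq> None}}"

lemma Qp_mono: "Qp D F dm A n Sx \<Longrightarrow> Sy \<subseteq> Sx \<Longrightarrow> Qp D F dm A n Sy"
  unfolding Qp_def by blast

lemma Res_form:
  assumes "(m, g) \<in> Res D" shows "\<exists>h. (m, h) \<in> D \<and> restriction_of (m, g) (m, h)"
proof -
  obtain H where H: "H \<in> D" "restriction_of (m, g) H" using assms by (auto simp: Res_def)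
  then have "fst H = m" by (simp add: restriction_of_def)
  then have "H = (m, snd H)" by (metis prod.collapse)
  then show ?thesis using H by metis
qed

lemma restriction_refl: "restriction_of F F" by (simp add: restriction_of_def)

lemma restriction_trans: "restriction_of F G \<Longrightarrow> restriction_of G H \<Longrightarrow> restriction_of F H"
  by (auto simp: restriction_of_def)

lemma restriction_P2: "restriction_of G F \<Longrightarrow> F \<in> P2 \<Longrightarrow> G \<in> P2"
  by (cases G; cases F) (auto simp: restriction_of_def P2_def)

lemma Res_P2: "D \<subseteq> P2 \<Longrightarrow> Res D \<subseteq> P2"
  using restriction_P2 by (auto simp: Res_def)

lemma tc_parts:
  assumes "total_clone D"
  shows "D \<subseteq> P2" "D \<subseteq> O2" "\<And>n i. 1 \<le> n \<Longrightarrow> i < n \<Longrightarrow> proj n i \<in> D"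
    "\<And>n f m gs. (n, f) \<in> D \<Longrightarrow> (\<forall>i<n. (m, gs i) \<in> D) \<Longrightarrow> pcomp (n, f) m gs \<in> D"
  using assms by (auto simp: total_clone_def partial_clone_def)

lemma O2_total: "(n, g) \<in> O2 \<Longrightarrow> length x = n \<Longrightarrow> g x \<noteq> None"
  by (auto simp: O2_def)

lemma pcomp_simp: "pcomp (n, f) m gs = (m, \<lambda>x. if length x = m \<and> (\<forall>i<n. gs i x \<noteq> None)
             then f (map (\<lambda>i. the (gs i x)) [0..<n]) else None)"
  by (simp add: pcomp_def)

lemma XX_strong:
  assumes tc: "total_clone D"
  shows "strong (XX D F dm A)"
proof -
  note tp = tc_parts[OF tc]
  have sub: "XX D F dm A \<subseteq> P2" using Res_P2[OF tp(1)] by (auto simp: XX_def)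
  have proj: "\<forall>n i. 1 \<le> n \<longrightarrow> i < n \<longrightarrow> proj n i \<in> XX D F dm A"
  proof (intro allI impI)
    fix n i :: nat assume "1 \<le> n" "i < n"
    then have "proj n i \<in> D" using tp(3) by blast
    then have "proj n i \<in> Res D" using restriction_refl unfolding Res_def by blast
    then show "proj n i \<in> XX D F dm A" by (simp add: XX_def)
  qed
  have comp: "pcomp (n, f) m gs \<in> XX D F dm A"
    if nf: "(n, f) \<in> XX D F dm A" and gs: "\<forall>i<n. (m, gs i) \<in> XX D F dm A" for n f m gs
  proof -
    have nP: "(n,f) \<in> P2" using nf sub by auto
    then have n1: "1 \<le> n" by (simp add: P2_def)
    have m1: "1 \<le> m" using gs n1 sub by (auto simp: P2_def)
    have pP2: "pcomp (n, f) m gs \<in> P2" using m1 by (auto simp: pcomp_def P2_def split: if_splits)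
    show ?thesis
    proof (cases "\<exists>i<n. (m, gs i) \<notin> Res D")
      case True
      then obtain i where i: "i < n" "(m, gs i) \<notin> Res D" by auto
      then have "Qp D F dm A m {x. gs i x \<noteq> None}" using gs by (auto simp: XX_def)
      moreover have "{x. snd (pcomp (n, f) m gs) x \<noteq> None} \<subseteq> {x. gs i x \<noteq> None}"
        using i(1) by (auto simp: pcomp_def split: if_splits)
      ultimately have "Qp D F dm A m {x. snd (pcomp (n, f) m gs) x \<noteq> None}" by (rule Qp_mono)
      then show ?thesis using pP2 by (auto simp: XX_def pcomp_def)
    next
      case False
      then have "\<forall>i<n. \<exists>h. (m, h) \<in> D \<and> restriction_of (m, gs i) (m, h)"
        using Res_form by blast
      then obtain hs where hs: "\<forall>i<n. (m, hs i) \<in> D \<and> restriction_of (m, gs i) (m, hs i)"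
        by metis
      have agree: "gs i x = hs i x" if "i < n" "gs i x \<noteq> None" for i x
        using hs that by (auto simp: restriction_of_def)
      show ?thesis
      proof (cases "(n, f) \<in> Res D")
        case True
        then obtain f0 where f0: "(n, f0) \<in> D" "restriction_of (n, f) (n, f0)"
          using Res_form by blast
        have "pcomp (n, f0) m hs \<in> D" using tp(4)[OF f0(1)] hs by auto
        moreover have "restriction_of (pcomp (n, f) m gs) (pcomp (n, f0) m hs)"
        proof -
          have "snd (pcomp (n, f) m gs) x = snd (pcomp (n, f0) m hs) x"
            if "snd (pcomp (n, f) m gs) x \<noteq> None" for x
          proof -
            from that have l: "length x = m" "\<forall>i<n. gs i x \<noteq> None"
              and fx: "f (map (\<lambda>i. the (gs i x)) [0..<n]) \<noteq> None"
              by (auto simp: pcomp_def split: if_splits)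
            have m: "map (\<lambda>i. the (gs i x)) [0..<n] = map (\<lambda>i. the (hs i x)) [0..<n]"
              using agree l by auto
            have hn: "\<forall>i<n. hs i x \<noteq> None" using agree l by metis
            have "snd (pcomp (n, f) m gs) x = f (map (\<lambda>i. the (gs i x)) [0..<n])"
              using l by (simp add: pcomp_def)
            also have "\<dots> = f0 (map (\<lambda>i. the (gs i x)) [0..<n])"
              using fx f0(2) by (simp add: restriction_of_def)
            also have "\<dots> = f0 (map (\<lambda>i. the (hs i x)) [0..<n])" by (simp only: m)
            also have "\<dots> = snd (pcomp (n, f0) m hs) x" using l hn by (simp add: pcomp_def)
            finally show ?thesis .
          qed
          then show ?thesis by (auto simp: restriction_of_def pcomp_def)
        qed
        ultimately show ?thesis by (auto simp: XX_def Res_def)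
      next
        case False
        then have "Qp D F dm A n {x. f x \<noteq> None}" using nf by (auto simp: XX_def)
        then obtain j gs' where j: "j \<in> A" "Dmap D n (dm j) gs'"
          "\<forall>x\<in>{x. f x \<noteq> None}. dapp gs' (dm j) x \<in> F j"
          by (auto simp: Qp_def)
        define gs'' where "gs'' = (\<lambda>q. snd (pcomp (n, gs' q) m hs))"
        have D'': "Dmap D m (dm j) gs''"
        proof -
          have "(m, gs'' q) \<in> D" if "q < dm j" for q
          proof -
            have "pcomp (n, gs' q) m hs \<in> D" using tp(4) j(2) that hs by (auto simp: Dmap_def)
            moreover have "fst (pcomp (n, gs' q) m hs) = m" by (simp add: pcomp_def)
            ultimately show ?thesis unfolding gs''_def by (metis prod.collapse)
          qed
          then show ?thesis by (simp add: Dmap_def)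
        qed
        have "dapp gs'' (dm j) x \<in> F j" if "snd (pcomp (n, f) m gs) x \<noteq> None" for x
        proof -
          from that have l: "length x = m" "\<forall>i<n. gs i x \<noteq> None"
            and fx: "f (map (\<lambda>i. the (gs i x)) [0..<n]) \<noteq> None"
            by (auto simp: pcomp_def split: if_splits)
          have hsn: "\<forall>i<n. hs i x \<noteq> None" using agree l by metis
          have m: "map (\<lambda>i. the (gs i x)) [0..<n] = map (\<lambda>i. the (hs i x)) [0..<n]"
            using agree l by auto
          have "dapp gs'' (dm j) x = dapp gs' (dm j) (map (\<lambda>i. the (hs i x)) [0..<n])"
            using l hsn by (simp add: dapp_def gs''_def pcomp_def)
          then show ?thesis using j(3) fx m by simp
        qed
        then have "Qp D F dm A m {x. snd (pcomp (n, f) m gs) x \<noteq> None}"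
          using j(1) D'' by (auto simp: Qp_def)
        then show ?thesis using pP2 by (auto simp: XX_def pcomp_def)
      qed
    qed
  qed
  have res: "G \<in> XX D F dm A" if F0in: "F0 \<in> XX D F dm A" and rG: "restriction_of G F0" for F0 G
  proof (cases "F0 \<in> Res D")
    case True
    then obtain H where "H \<in> D" "restriction_of F0 H" by (auto simp: Res_def)
    then have "G \<in> Res D" using rG restriction_trans unfolding Res_def by blast
    then show ?thesis by (simp add: XX_def)
  next
    case False
    obtain n f where nf0: "F0 = (n, f)" by (cases F0)
    have nf: "F0 = (n, f)" "(n, f) \<in> P2" "Qp D F dm A n {x. f x \<noteq> None}"
      using F0in False nf0 by (auto simp: XX_def)
    obtain g where g: "G = (n, g)" using rG nf(1) by (cases G) (auto simp: restriction_of_def)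
    have "{x. g x \<noteq> None} \<subseteq> {x. f x \<noteq> None}" using rG nf(1) g
      by (auto simp: restriction_of_def)
    then have "Qp D F dm A n {x. g x \<noteq> None}" using nf(3) Qp_mono by blast
    moreover have "G \<in> P2" using restriction_P2 rG nf by simp
    ultimately show ?thesis using g by (auto simp: XX_def)
  qed
  have pc: "partial_clone (XX D F dm A)"
    unfolding partial_clone_def using sub proj comp by blast
  show ?thesis
    unfolding strong_def using pc res by blast
qed



lemma foldr_neq: "foldr (\<noteq>) l a = (foldr (\<noteq>) l False \<noteq> a)"
  by (induction l) auto

lemma par_xor:
  "length as = length x \<Longrightarrow> length y = length x \<Longrightarrow>
   foldr (\<noteq>) (map2 (\<and>) as (xorl x y)) False =
   (foldr (\<noteq>) (map2 (\<and>) as x) False \<noteq> foldr (\<noteq>) (map2 (\<and>) as y) False)"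
proof (induction as arbitrary: x y)
  case Nil then show ?case by (simp add: xorl_def)
next
  case (Cons a as)
  then obtain b x' c y' where "x = b # x'" "y = c # y'"
    by (metis length_Suc_conv)
  then show ?case using Cons by (auto simp: xorl_def)
qed

lemma lin3:
  assumes "(n, f) \<in> Lin" "length x = n" "length y = n" "length z = n"
  shows "f (xorl x (xorl y z)) = Some (the (f x) \<noteq> (the (f y) \<noteq> the (f z)))"
proof -
  obtain a0 as where L: "length as = n"
    "\<forall>x. length x = n \<longrightarrow> f x = Some (foldr (\<noteq>) (map2 (\<and>) as x) a0)"
    using assms(1) by (auto simp: Lin_def)
  define p where "p = (\<lambda>x. foldr (\<noteq>) (map2 (\<and>) as x) False)"
  have fx: "f w = Some (p w \<noteq> a0)" if "length w = n" for w
  proof -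
    have "f w = Some (foldr (\<noteq>) (map2 (\<and>) as w) a0)" using L(2) that by blast
    also have "foldr (\<noteq>) (map2 (\<and>) as w) a0 = (p w \<noteq> a0)" unfolding p_def by (rule foldr_neq)
    finally show ?thesis .
  qed
  have lyz: "length (xorl y z) = n" using assms by simp
  have lxyz: "length (xorl x (xorl y z)) = n" using assms by simp
  have "p (xorl y z) = (p y \<noteq> p z)" unfolding p_def using par_xor[of as y z] L(1) assms by simp
  moreover have "p (xorl x (xorl y z)) = (p x \<noteq> p (xorl y z))"
    unfolding p_def using par_xor[of as x "xorl y z"] L(1) assms lyz by simp
  ultimately have e: "p (xorl x (xorl y z)) = (p x \<noteq> (p y \<noteq> p z))" by simp
  have "f (xorl x (xorl y z)) = Some ((p x \<noteq> (p y \<noteq> p z)) \<noteq> a0)" using fx[OF lxyz] e by simp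
  moreover have "((p x \<noteq> (p y \<noteq> p z)) \<noteq> a0) = ((p x \<noteq> a0) \<noteq> ((p y \<noteq> a0) \<noteq> (p z \<noteq> a0)))"
    by (cases "p x"; cases "p y"; cases "p z"; cases a0) simp_all
  ultimately show ?thesis using fx[OF assms(2)] fx[OF assms(3)] fx[OF assms(4)] by simp
qed

lemma lin_total: "(n, f) \<in> Lin \<Longrightarrow> length x = n \<Longrightarrow> f x \<noteq> None"
  by (auto simp: Lin_def)

lemma Dmap_aff:
  assumes "D \<subseteq> Lin" "Dmap D n d gs"
  shows "baff (dapp gs d) n d"
  unfolding baff_def
proof (intro conjI allI impI)
  fix x :: "bool list" assume "length x = n" then show "length (dapp gs d x) = d" by (simp add: dapp_def)
next
  fix x y z :: "bool list" assume l: "length x = n" "length y = n" "length z = n"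
  have L: "\<forall>i<d. (n, gs i) \<in> Lin" using assms by (auto simp: Dmap_def)
  show "dapp gs d (xorl x (xorl y z)) = xorl (dapp gs d x) (xorl (dapp gs d y) (dapp gs d z))"
  proof (rule list_eqI')
    show "length (dapp gs d (xorl x (xorl y z))) = length (xorl (dapp gs d x) (xorl (dapp gs d y) (dapp gs d z)))"
      by (simp add: dapp_def)
    fix i assume "i < length (dapp gs d (xorl x (xorl y z)))"
    then have i: "i < d" by (simp add: dapp_def)
    have "gs i (xorl x (xorl y z)) = Some (the (gs i x) \<noteq> (the (gs i y) \<noteq> the (gs i z)))"
      using lin3[of n "gs i" x y z] L i l by blast
    then show "dapp gs d (xorl x (xorl y z)) ! i = xorl (dapp gs d x) (xorl (dapp gs d y) (dapp gs d z)) ! i"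
      using i by (simp add: dapp_def)
  qed
qed

lemma XX_total:
  assumes tc: "total_clone D"
    and H3: "\<forall>n j gs. 1 \<le> n \<longrightarrow> Dmap D n (dm j) gs \<longrightarrow> \<not>(\<forall>x. length x = n \<longrightarrow> dapp gs (dm j) x \<in> F j)"
  shows "XX D F dm A \<inter> O2 = D"
proof
  note tp = tc_parts[OF tc]
  show "D \<subseteq> XX D F dm A \<inter> O2"
  proof
    fix G assume "G \<in> D"
    then have "G \<in> Res D" "G \<in> O2" using restriction_refl tp(2) unfolding Res_def by blast+
    then show "G \<in> XX D F dm A \<inter> O2" unfolding XX_def by blast
  qed
  show "XX D F dm A \<inter> O2 \<subseteq> D"
  proof
    fix G assume G: "G \<in> XX D F dm A \<inter> O2"
    obtain n f where nf: "G = (n, f)" by (cases G)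
    have GO: "(n, f) \<in> O2" using G nf by blast
    have fdef: "f x \<noteq> None" if "length x = n" for x using O2_total[OF GO that] .
    show "G \<in> D"
    proof (cases "G \<in> Res D")
      case True
      then obtain h where h: "(n, h) \<in> D" "restriction_of (n, f) (n, h)"
        using Res_form[of n f D] nf by blast
      have hO: "(n, h) \<in> O2" using h tp(2) by blast
      have "f = h"
      proof
        fix x show "f x = h x"
        proof (cases "length x = n")
          case True
          then have "f x \<noteq> None" using fdef by blast
          then show ?thesis using h(2) unfolding restriction_of_def by simp
        next
          case False
          have "f x = None" using GO False unfolding O2_def P2_def by blast
          moreover have "h x = None" using hO False unfolding O2_def P2_def by blast
          ultimately show ?thesis by simp
        qed
      qed
      then show ?thesis using h nf by simp
    next
      case False
      then have "G \<in> {(n, f). (n, f) \<in> P2 \<and> Qp D F dm A n {x. f x \<noteq> None}}"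
        using G unfolding XX_def by blast
      then have Q: "Qp D F dm A n {x. f x \<noteq> None}" "(n,f) \<in> P2" using nf by auto
      have "{x. length x = n} \<subseteq> {x. f x \<noteq> None}" using fdef by blast
      then have "Qp D F dm A n {x. length x = n}" using Q(1) Qp_mono by blast
      then obtain j gs where jg: "Dmap D n (dm j) gs" "\<forall>x\<in>{x. length x = n}. dapp gs (dm j) x \<in> F j"
        unfolding Qp_def by blast
      moreover have "1 \<le> n" using Q(2) by (simp add: P2_def)
      ultimately show ?thesis using H3 by auto
    qed
  qed
qed

definition fk :: "(nat \<Rightarrow> bool list set) \<Rightarrow> (nat \<Rightarrow> nat) \<Rightarrow> (nat \<Rightarrow> bool list) \<Rightarrow> nat \<Rightarrow> pfun" where
  "fk F dm p k = (dm k, \<lambda>x. if x \<in> F k then Some (x = p k) else None)"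

lemma app_proj: "length x = n \<Longrightarrow> dapp (\<lambda>i. snd (proj n i)) n x = x"
  by (rule list_eqI') (auto simp: dapp_def proj_def)

lemma fk_in:
  assumes tc: "total_clone D" and dm: "1 \<le> dm k" and FL: "F k \<subseteq> {x. length x = dm k}"
    and k: "k \<in> A"
  shows "fk F dm p k \<in> XX D F dm A"
proof -
  note tp = tc_parts[OF tc]
  have P: "fk F dm p k \<in> P2" using dm FL unfolding fk_def P2_def by (auto split: if_splits)
  have Dm: "Dmap D (dm k) (dm k) (\<lambda>i. snd (proj (dm k) i))"
    unfolding Dmap_def
  proof (intro allI impI)
    fix i assume "i < dm k"
    then have "proj (dm k) i \<in> D" using tp(3) dm by blast
    moreover have "proj (dm k) i = (dm k, snd (proj (dm k) i))" by (simp add: proj_def)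
    ultimately show "(dm k, snd (proj (dm k) i)) \<in> D" by simp
  qed
  have dom: "{x. snd (fk F dm p k) x \<noteq> None} = F k" by (auto simp: fk_def)
  have "\<forall>x\<in>F k. dapp (\<lambda>i. snd (proj (dm k) i)) (dm k) x \<in> F k"
  proof
    fix x assume "x \<in> F k"
    moreover have "length x = dm k" using \<open>x \<in> F k\<close> FL by blast
    ultimately show "dapp (\<lambda>i. snd (proj (dm k) i)) (dm k) x \<in> F k" using app_proj[of x "dm k"] by simp
  qed
  then have "Qp D F dm A (dm k) {x. snd (fk F dm p k) x \<noteq> None}"
    unfolding Qp_def dom using k Dm by blast
  then show ?thesis using P unfolding XX_def fk_def by simp
qed

lemma fk_notin:
  assumes DL: "D \<subseteq> Lin" and FL: "F k \<subseteq> {x. length x = dm k}"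
    and H2: "\<forall>k j gs. Dmap D (dm k) (dm j) gs \<longrightarrow> (\<forall>x\<in>F k. dapp gs (dm j) x \<in> F j) \<longrightarrow> j = k"
    and H4: "p k \<in> F k" "z1 k \<in> F k" "z2 k \<in> F k" "z3 k \<in> F k"
       "p k \<noteq> z1 k" "p k \<noteq> z2 k" "p k \<noteq> z3 k" "xorl (z1 k) (xorl (z2 k) (z3 k)) = p k"
    and k: "k \<notin> A"
  shows "fk F dm p k \<notin> XX D F dm A"
proof
  assume as: "fk F dm p k \<in> XX D F dm A"
  show False
  proof (cases "fk F dm p k \<in> Res D")
    case True
    then obtain h where h: "(dm k, h) \<in> D" "restriction_of (fk F dm p k) (dm k, h)"
      using Res_form[of "dm k" _ D] unfolding fk_def by blast
    have hv: "h x = Some (x = p k)" if "x \<in> F k" for x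
    proof -
      have "snd (fk F dm p k) x = Some (x = p k)" using that by (simp add: fk_def)
      then show ?thesis using h(2) unfolding restriction_of_def by simp
    qed
    have hL: "(dm k, h) \<in> Lin" using h DL by blast
    have l: "length (z1 k) = dm k" "length (z2 k) = dm k" "length (z3 k) = dm k" using H4 FL by auto
    have "h (xorl (z1 k) (xorl (z2 k) (z3 k))) = Some (the (h (z1 k)) \<noteq> (the (h (z2 k)) \<noteq> the (h (z3 k))))"
      using lin3[OF hL l] .
    then have "h (p k) = Some False" using H4 hv by simp
    moreover have "h (p k) = Some True" using hv H4(1) by simp
    ultimately show False by simp
  next
    case False
    then have "Qp D F dm A (dm k) {x. snd (fk F dm p k) x \<noteq> None}"
      using as unfolding XX_def fk_def by simp
    moreover have "{x. snd (fk F dm p k) x \<noteq> None} = F k" by (auto simp: fk_def)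
    ultimately have "Qp D F dm A (dm k) (F k)" by simp
    then obtain j gs where j: "j \<in> A" "Dmap D (dm k) (dm j) gs" "\<forall>x\<in>F k. dapp gs (dm j) x \<in> F j"
      unfolding Qp_def by blast
    then have "j = k" using H2 by blast
    then show False using j(1) k by simp
  qed
qed



lemma Dmap_T:
  assumes "D \<subseteq> T a" "Dmap D n d gs"
  shows "dapp gs d (replicate n a) = replicate d a"
proof (rule list_eqI')
  show "length (dapp gs d (replicate n a)) = length (replicate d a)" by (simp add: dapp_def)
  fix i assume "i < length (dapp gs d (replicate n a))"
  then have i: "i < d" by (simp add: dapp_def)
  then have "(n, gs i) \<in> T a" using assms by (auto simp: Dmap_def)
  then have "gs i (replicate n a) = Some a" by (simp add: T_def)
  then show "dapp gs d (replicate n a) ! i = replicate d a ! i" using i by (simp add: dapp_def)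
qed

lemma Dmap_S:
  assumes "D \<subseteq> S" "Dmap D n d gs" "length x = n"
  shows "dapp gs d (map Not x) = map Not (dapp gs d x)"
proof (rule list_eqI')
  show "length (dapp gs d (map Not x)) = length (map Not (dapp gs d x))" by (simp add: dapp_def)
  fix i assume "i < length (dapp gs d (map Not x))"
  then have i: "i < d" by (simp add: dapp_def)
  then have "(n, gs i) \<in> S" using assms by (auto simp: Dmap_def)
  then have "gs i (map Not x) = map_option Not (gs i x)" "gs i x \<noteq> None"
    using assms(3) by (auto simp: S_def O2_def)
  then show "dapp gs d (map Not x) ! i = map Not (dapp gs d x) ! i" using i
    by (auto simp: dapp_def)
qed

lemma H4_gen:
  assumes "2 \<le> w" "w + 2 \<le> N"
  defines "p \<equiv> bvec N {..<w}"
    and "z1 \<equiv> bvec N ({..<w} - {0} \<union> {w})"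
    and "z2 \<equiv> bvec N ({..<w} - {1} \<union> {w+1})"
    and "z3 \<equiv> bvec N ({..<w} - {0,1} \<union> {w, w+1})"
  shows "p \<in> Wt N w" "z1 \<in> Wt N w" "z2 \<in> Wt N w" "z3 \<in> Wt N w"
    "p \<noteq> z1" "p \<noteq> z2" "p \<noteq> z3" "xorl z1 (xorl z2 z3) = p"
proof -
  show "p \<in> Wt N w" unfolding p_def using assms(2) by (intro vec_in_Wt) auto
  show "z1 \<in> Wt N w" unfolding z1_def using assms(1,2) by (intro vec_in_Wt) auto
  show "z2 \<in> Wt N w" unfolding z2_def using assms(1,2) by (intro vec_in_Wt) auto
  have "card ({..<w} - {0, 1} \<union> {w, w + 1}) = card ({..<w} - {0, 1}) + 2"
    by (subst card_Un_disjoint) auto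
  also have "card ({..<w} - {0, 1}) = w - 2" using assms(1) by (subst card_Diff_subset) auto
  finally have "card ({..<w} - {0, 1} \<union> {w, w + 1}) = w" using assms(1) by simp
  then show "z3 \<in> Wt N w" unfolding z3_def using assms(2) by (intro vec_in_Wt) auto
  have w: "w < N" using assms by simp
  have "p ! 0 \<noteq> z1 ! 0" unfolding p_def z1_def using assms by simp
  then show "p \<noteq> z1" by metis
  have "p ! 1 \<noteq> z2 ! 1" unfolding p_def z2_def using assms by simp
  then show "p \<noteq> z2" by metis
  have "p ! 0 \<noteq> z3 ! 0" unfolding p_def z3_def using assms by simp
  then show "p \<noteq> z3" by metis
  show "xorl z1 (xorl z2 z3) = p" unfolding p_def z1_def z2_def z3_def
    by (rule list_eqI') auto
qed

lemma main_lower: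
  fixes F :: "nat \<Rightarrow> bool list set" and dm :: "nat \<Rightarrow> nat" and p z1 z2 z3 :: "nat \<Rightarrow> bool list"
  assumes tc: "total_clone D" and DL: "D \<subseteq> Lin"
    and dm: "\<forall>k. 1 \<le> dm k" and FL: "\<forall>k. F k \<subseteq> {x. length x = dm k}"
    and H2: "\<forall>k j gs. Dmap D (dm k) (dm j) gs \<longrightarrow> (\<forall>x\<in>F k. dapp gs (dm j) x \<in> F j) \<longrightarrow> j = k"
    and H3: "\<forall>n j gs. 1 \<le> n \<longrightarrow> Dmap D n (dm j) gs \<longrightarrow> \<not>(\<forall>x. length x = n \<longrightarrow> dapp gs (dm j) x \<in> F j)"
    and H4: "\<forall>k. p k \<in> F k \<and> z1 k \<in> F k \<and> z2 k \<in> F k \<and> z3 k \<in> F k \<and>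
       p k \<noteq> z1 k \<and> p k \<noteq> z2 k \<and> p k \<noteq> z3 k \<and> xorl (z1 k) (xorl (z2 k) (z3 k)) = p k"
  shows "(UNIV :: nat set set) \<lesssim> I_str D"
proof -
  have inI: "XX D F dm A \<in> I_str D" for A
    using XX_strong[OF tc] XX_total[OF tc H3] by (simp add: I_str_def)
  have inj: "inj_on (XX D F dm) UNIV"
  proof (rule inj_onI)
    fix A B :: "nat set" assume e: "XX D F dm A = XX D F dm B"
    show "A = B"
    proof (rule ccontr)
      assume "A \<noteq> B"
      then obtain k where "(k \<in> A \<and> k \<notin> B) \<or> (k \<in> B \<and> k \<notin> A)" by blast
      then show False
      proof
        assume k: "k \<in> A \<and> k \<notin> B"
        have "fk F dm p k \<in> XX D F dm A" using fk_in[OF tc] dm FL k by blast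
        moreover have "fk F dm p k \<notin> XX D F dm B"
          using fk_notin[OF DL _ H2, of k p z1 z2 z3 B] FL H4 k by blast
        ultimately show False using e by simp
      next
        assume k: "k \<in> B \<and> k \<notin> A"
        have "fk F dm p k \<in> XX D F dm B" using fk_in[OF tc] dm FL k by blast
        moreover have "fk F dm p k \<notin> XX D F dm A"
          using fk_notin[OF DL _ H2, of k p z1 z2 z3 A] FL H4 k by blast
        ultimately show False using e by simp
      qed
    qed
  qed
  show ?thesis unfolding lepoll_def using inj inI by blast
qed

definition enc :: "pfun \<Rightarrow> nat \<times> bool option list" where
  "enc F = (fst F, map (snd F) (List.n_lists (fst F) [False, True]))"

lemma enc_inj: "inj_on enc P2"
proof (rule inj_onI)
  fix F G assume F: "F \<in> P2" and G: "G \<in> P2" and e: "enc F = enc G"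
  obtain n f where nf: "F = (n, f)" by (cases F)
  obtain m g where mg: "G = (m, g)" by (cases G)
  have nm: "n = m" using e nf mg by (simp add: enc_def)
  have mp: "map f (List.n_lists n [False, True]) = map g (List.n_lists n [False, True])"
    using e nf mg nm by (simp add: enc_def)
  have "f = g"
  proof
    fix x show "f x = g x"
    proof (cases "length x = n")
      case True
      then have "x \<in> set (List.n_lists n [False, True])"
        by (auto simp: set_n_lists)
      then show ?thesis using mp by (simp add: map_eq_conv)
    next
      case False
      have "f x = None" using F nf False by (auto simp: P2_def)
      moreover have "g x = None" using G mg nm False by (auto simp: P2_def)
      ultimately show ?thesis by simp
    qed
  qed
  then show "F = G" using nf mg nm by simp
qed

lemma countable_P2: "countable P2"
proof -
  have "countable (enc ` P2)" by (rule countableI_type)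
  then show ?thesis using countable_image_inj_on enc_inj by blast
qed

lemma main_upper: "I_str D \<lesssim> (UNIV :: nat set set)"
proof -
  obtain g :: "pfun \<Rightarrow> nat" where g: "inj_on g P2" using countable_P2 unfolding countable_def by blast
  have sub: "I_str D \<subseteq> Pow P2"
    by (auto simp: I_str_def strong_def partial_clone_def)
  have "inj_on (image g) (Pow P2)" using inj_on_image_Pow[OF g] .
  then have "inj_on (image g) (I_str D)" using sub inj_on_subset by blast
  then show ?thesis unfolding lepoll_def by blast
qed



lemma H4_all:
  assumes "\<forall>k. 2 \<le> w k \<and> w k + 2 \<le> N k"
  shows "\<forall>k. (\<lambda>k. bvec (N k) {..<w k}) k \<in> Wt (N k) (w k) \<and>
     (\<lambda>k. bvec (N k) ({..<w k} - {0} \<union> {w k})) k \<in> Wt (N k) (w k) \<and>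
     (\<lambda>k. bvec (N k) ({..<w k} - {1} \<union> {w k+1})) k \<in> Wt (N k) (w k) \<and>
     (\<lambda>k. bvec (N k) ({..<w k} - {0,1} \<union> {w k, w k+1})) k \<in> Wt (N k) (w k) \<and>
     (\<lambda>k. bvec (N k) {..<w k}) k \<noteq> (\<lambda>k. bvec (N k) ({..<w k} - {0} \<union> {w k})) k \<and>
     (\<lambda>k. bvec (N k) {..<w k}) k \<noteq> (\<lambda>k. bvec (N k) ({..<w k} - {1} \<union> {w k+1})) k \<and>
     (\<lambda>k. bvec (N k) {..<w k}) k \<noteq> (\<lambda>k. bvec (N k) ({..<w k} - {0,1} \<union> {w k, w k+1})) k \<and>
     xorl ((\<lambda>k. bvec (N k) ({..<w k} - {0} \<union> {w k})) k)
       (xorl ((\<lambda>k. bvec (N k) ({..<w k} - {1} \<union> {w k+1})) k)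
             ((\<lambda>k. bvec (N k) ({..<w k} - {0,1} \<union> {w k, w k+1})) k)) = (\<lambda>k. bvec (N k) {..<w k}) k"
  apply (intro allI)
  subgoal for k
    using H4_gen[of "w k" "N k"] assms by simp
  done

lemma FL_Wt: "\<forall>k. Wt (N k) (w k) \<subseteq> {x. length x = N k}" by (auto simp: Wt_def)

lemma case_T0:
  assumes tc: "total_clone D" and DL: "D \<subseteq> Lin" and DT: "D \<subseteq> T False"
  shows "(UNIV :: nat set set) \<lesssim> I_str D"
proof -
  let ?N = "\<lambda>k. NN 0 k" and ?w = "\<lambda>k. NN 0 k - ss 0 k"
  let ?F = "\<lambda>k. Wt (?N k) (?w k)"
  have ww: "\<forall>k. 2 \<le> ?w k \<and> ?w k + 2 \<le> ?N k"
  proof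
    fix k
    have "?w k = (tt 0 k - 1) * ss 0 k" by (simp add: NN_def diff_mult_distrib)
    moreover have "2 \<le> tt 0 k - 1" using tt_pos[of 0 k] by simp
    moreover have "2 \<le> ss 0 k" by (rule ss_ge2)
    ultimately have "4 \<le> ?w k" using mult_le_mono[of 2 "tt 0 k - 1" 2 "ss 0 k"] by simp
    moreover have "ss 0 k < NN 0 k" by (rule NN_gt_ss)
    ultimately show "2 \<le> ?w k \<and> ?w k + 2 \<le> ?N k" using ss_ge2[of 0 k] by simp
  qed
  have dm: "\<forall>k. 1 \<le> ?N k"
  proof
    fix k
    have "2 \<le> ?w k \<and> ?w k + 2 \<le> ?N k" using ww by blast
    then show "1 \<le> ?N k" by linarith
  qed
  have H2: "\<forall>k j gs. Dmap D (?N k) (?N j) gs \<longrightarrow> (\<forall>x\<in>?F k. dapp gs (?N j) x \<in> ?F j) \<longrightarrow> j = k"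
  proof (intro allI impI)
    fix k j gs assume a: "Dmap D (?N k) (?N j) gs" "\<forall>x\<in>?F k. dapp gs (?N j) x \<in> ?F j"
    show "j = k"
      by (rule anti_T0[OF Dmap_aff[OF DL a(1)] Dmap_T[OF DT a(1)] a(2)])
  qed
  have H3: "\<forall>n j gs. 1 \<le> n \<longrightarrow> Dmap D n (?N j) gs \<longrightarrow> \<not>(\<forall>x. length x = n \<longrightarrow> dapp gs (?N j) x \<in> ?F j)"
  proof (intro allI impI notI)
    fix n j gs assume a: "1 \<le> n" "Dmap D n (?N j) gs" "\<forall>x. length x = n \<longrightarrow> dapp gs (?N j) x \<in> ?F j"
    have "replicate (?N j) False \<in> ?F j" using a(3) Dmap_T[OF DT a(2)] by (metis length_replicate)
    moreover have "0 < ?w j" using NN_gt_ss[of 0 j] by simp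
    ultimately show False using zeros_not_Wt by blast
  qed
  show ?thesis
    by (rule main_lower[OF tc DL dm FL_Wt H2 H3 H4_all[OF ww]])
qed

lemma case_T1:
  assumes tc: "total_clone D" and DL: "D \<subseteq> Lin" and DT: "D \<subseteq> T True"
  shows "(UNIV :: nat set set) \<lesssim> I_str D"
proof -
  let ?N = "\<lambda>k. NN 0 k" and ?w = "\<lambda>k. ss 0 k"
  let ?F = "\<lambda>k. Wt (?N k) (?w k)"
  have ww: "\<forall>k. 2 \<le> ?w k \<and> ?w k + 2 \<le> ?N k"
  proof
    fix k
    have "3 * ss 0 k \<le> NN 0 k" using tt_pos[of 0 k] by (simp add: NN_def)
    then show "2 \<le> ?w k \<and> ?w k + 2 \<le> ?N k" using ss_ge2[of 0 k] by simp
  qed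
  have dm: "\<forall>k. 1 \<le> ?N k"
  proof
    fix k
    have "2 \<le> ?w k \<and> ?w k + 2 \<le> ?N k" using ww by blast
    then show "1 \<le> ?N k" by linarith
  qed
  have H2: "\<forall>k j gs. Dmap D (?N k) (?N j) gs \<longrightarrow> (\<forall>x\<in>?F k. dapp gs (?N j) x \<in> ?F j) \<longrightarrow> j = k"
  proof (intro allI impI)
    fix k j gs assume a: "Dmap D (?N k) (?N j) gs" "\<forall>x\<in>?F k. dapp gs (?N j) x \<in> ?F j"
    show "j = k"
      by (rule anti_T1[OF Dmap_aff[OF DL a(1)] Dmap_T[OF DT a(1)] a(2)])
  qed
  have H3: "\<forall>n j gs. 1 \<le> n \<longrightarrow> Dmap D n (?N j) gs \<longrightarrow> \<not>(\<forall>x. length x = n \<longrightarrow> dapp gs (?N j) x \<in> ?F j)"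
  proof (intro allI impI notI)
    fix n j gs assume a: "1 \<le> n" "Dmap D n (?N j) gs" "\<forall>x. length x = n \<longrightarrow> dapp gs (?N j) x \<in> ?F j"
    have "replicate (?N j) True \<in> ?F j" using a(3) Dmap_T[OF DT a(2)] by (metis length_replicate)
    moreover have "?w j < ?N j" using NN_gt_ss[of 0 j] by simp
    ultimately show False using ones_not_Wt by blast
  qed
  show ?thesis
    by (rule main_lower[OF tc DL dm FL_Wt H2 H3 H4_all[OF ww]])
qed

lemma case_S:
  assumes tc: "total_clone D" and DL: "D \<subseteq> Lin" and DS: "D \<subseteq> S"
  shows "(UNIV :: nat set set) \<lesssim> I_str D"
proof -
  let ?N = "\<lambda>k. NN 1 k" and ?w = "\<lambda>k. ss 1 k"
  let ?F = "\<lambda>k. Wt (?N k) (?w k)"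
  have ww: "\<forall>k. 2 \<le> ?w k \<and> ?w k + 2 \<le> ?N k"
  proof
    fix k
    have "3 * ss 1 k \<le> NN 1 k" using tt_pos[of 1 k] by (simp add: NN_def)
    then show "2 \<le> ?w k \<and> ?w k + 2 \<le> ?N k" using ss_ge2[of 1 k] by simp
  qed
  have dm: "\<forall>k. 1 \<le> ?N k"
  proof
    fix k
    have "2 \<le> ?w k \<and> ?w k + 2 \<le> ?N k" using ww by blast
    then show "1 \<le> ?N k" by linarith
  qed
  have H2: "\<forall>k j gs. Dmap D (?N k) (?N j) gs \<longrightarrow> (\<forall>x\<in>?F k. dapp gs (?N j) x \<in> ?F j) \<longrightarrow> j = k"
  proof (intro allI impI)
    fix k j gs assume a: "Dmap D (?N k) (?N j) gs" "\<forall>x\<in>?F k. dapp gs (?N j) x \<in> ?F j"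
    have sd: "\<forall>x. length x = ?N k \<longrightarrow> dapp gs (?N j) (map Not x) = map Not (dapp gs (?N j) x)"
      using Dmap_S[OF DS a(1)] by blast
    show "j = k"
      by (rule anti_S[OF Dmap_aff[OF DL a(1)] sd a(2)])
  qed
  have H3: "\<forall>n j gs. 1 \<le> n \<longrightarrow> Dmap D n (?N j) gs \<longrightarrow> \<not>(\<forall>x. length x = n \<longrightarrow> dapp gs (?N j) x \<in> ?F j)"
  proof (intro allI impI notI)
    fix n j gs assume a: "1 \<le> n" "Dmap D n (?N j) gs" "\<forall>x. length x = n \<longrightarrow> dapp gs (?N j) x \<in> ?F j"
    let ?x = "replicate n False"
    let ?y = "dapp gs (?N j) ?x"
    have y: "?y \<in> ?F j" using a(3) by simp
    have "dapp gs (?N j) (map Not ?x) \<in> ?F j" using a(3) by simp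
    then have ny: "map Not ?y \<in> ?F j" using Dmap_S[OF DS a(2), of ?x] by simp
    have "card (bsupp (map Not ?y)) = ?N j - ?w j" using y by (simp add: card_supp_not Wt_def)
    then have "?N j - ?w j = ?w j" using ny by (simp add: Wt_def)
    moreover have "3 * ss 1 j \<le> NN 1 j" using tt_pos[of 1 j] by (simp add: NN_def)
    ultimately show False using ss_ge2[of 1 j] by linarith
  qed
  show ?thesis
    by (rule main_lower[OF tc DL dm FL_Wt H2 H3 H4_all[OF ww]])
qed


theorem mainTheorem7:
  fixes D :: "pfun set"
  assumes "total_clone D"
    and "D \<subseteq> Lin"
    and "\<exists>B \<in> {T False, T True, S}. D \<subseteq> B"
  shows "I_str D \<approx> (UNIV :: real set)"
proof -
  obtain B where B: "B \<in> {T False, T True, S}" "D \<subseteq> B" using assms(3) by blast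
  have low: "(UNIV :: nat set set) \<lesssim> I_str D"
  proof -
    consider "B = T False" | "B = T True" | "B = S" using B(1) by blast
    then show ?thesis
    proof cases
      case 1 then show ?thesis using case_T0[OF assms(1,2)] B(2) by simp
    next
      case 2 then show ?thesis using case_T1[OF assms(1,2)] B(2) by simp
    next
      case 3 then show ?thesis using case_S[OF assms(1,2)] B(2) by simp
    qed
  qed
  have "I_str D \<approx> (UNIV :: nat set set)" using lepoll_antisym[OF main_upper low] .
  then show ?thesis using nat_sets_eqpoll_reals eqpoll_trans by blast
qed

end
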